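(* Let $(V,\mathcal{H})$ be a hypergraph and $X,Y\subseteq V$ disjoint. There exists a minimal hitting set $T\in\mathrm{Tr}(\mathcal{H})$ with $X\subseteq T\subseteq V\setminus Y$ if and only if there exists a family of edges $\{E_x\}_{x\in X}\subseteq\mathcal{H}$ such that (1) for every $x\in X$, $(E_x\setminus Y)\cap X=\{x\}$; and (2) for every edge $E\in\mathcal{H}$ with $(E\setminus Y)\cap X=\emptyset$ we have $E\setminus Y\not\subseteq\bigcup_{x\in X}(E_x\setminus Y)$.
   Context: $\mathrm{Tr}(\mathcal{H})$ denotes the set of inclusion-wise minimal hitting sets of $\mathcal{H}$ (sets meeting every edge, minimal under inclusion). *)

theory Defs
  imports Main
begin

definition hypergraph :: "'a set \<Rightarrow> 'a set set \<Rightarrow> bool" where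
  "hypergraph V H \<longleftrightarrow> finite V \<and> (\<forall>E\<in>H. E \<subseteq> V)"

definition hitting_set :: "'a set \<Rightarrow> 'a set set \<Rightarrow> 'a set \<Rightarrow> bool" where
  "hitting_set V H T \<longleftrightarrow> T \<subseteq> V \<and> (\<forall>E\<in>H. T \<inter> E \<noteq> {})"

definition Tr :: "'a set \<Rightarrow> 'a set set \<Rightarrow> 'a set set" where
  "Tr V H = {T. hitting_set V H T \<and> (\<forall>S. S \<subset> T \<longrightarrow> \<not> hitting_set V H S)}"

end

theory Submission
  imports Defs
begin

lemma exists_min_hs:
  assumes "finite T0" "hitting_set V H T0"
  shows "\<exists>T\<subseteq>T0. T \<in> Tr V H"
  using assms
proof (induction T0 rule: finite_psubset_induct)
  case (psubset A)
  show ?case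
  proof (cases "A \<in> Tr V H")
    case True then show ?thesis by blast
  next
    case False
    then obtain S where S: "S \<subset> A" "hitting_set V H S"
      using psubset.prems unfolding Tr_def by auto
    then obtain T where "T \<subseteq> S" "T \<in> Tr V H" using psubset.IH by meson
    then show ?thesis using S(1) by auto
  qed
qed

theorem corollary1:
  fixes V :: "'a set" and H :: "'a set set" and X Y :: "'a set"
  assumes "hypergraph V H"
    and "X \<subseteq> V" and "Y \<subseteq> V" and "X \<inter> Y = {}"
  shows "(\<exists>T\<in>Tr V H. X \<subseteq> T \<and> T \<subseteq> V - Y) \<longleftrightarrow>
         (\<exists>Ex :: 'a \<Rightarrow> 'a set.
            (\<forall>x\<in>X. Ex x \<in> H) \<and>
            (\<forall>x\<in>X. (Ex x - Y) \<inter> X = {x}) \<and>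
            (\<forall>E\<in>H. (E - Y) \<inter> X = {} \<longrightarrow> \<not> (E - Y \<subseteq> (\<Union>x\<in>X. Ex x - Y))))"
proof
  assume "\<exists>T\<in>Tr V H. X \<subseteq> T \<and> T \<subseteq> V - Y"
  then obtain T where T: "T \<in> Tr V H" "X \<subseteq> T" "T \<subseteq> V - Y" by blast
  have hs: "hitting_set V H T" using T(1) unfolding Tr_def by blast
  have priv: "\<exists>E\<in>H. E \<inter> T = {x}" if "x \<in> X" for x
  proof -
    have "T - {x} \<subset> T" using that T(2) by blast
    then have "\<not> hitting_set V H (T - {x})" using T(1) unfolding Tr_def by blast
    then obtain E where "E \<in> H" "(T - {x}) \<inter> E = {}"
      using hs unfolding hitting_set_def by blast
    moreover have "T \<inter> E \<noteq> {}" using hs \<open>E \<in> H\<close> unfolding hitting_set_def by blast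
    ultimately show ?thesis by blast
  qed
  define Ex where "Ex x = (SOME E. E \<in> H \<and> E \<inter> T = {x})" for x
  have Ex: "Ex x \<in> H \<and> Ex x \<inter> T = {x}" if "x \<in> X" for x
    unfolding Ex_def using someI_ex[OF priv[OF that, unfolded Bex_def]] by blast
  show "\<exists>Ex :: 'a \<Rightarrow> 'a set.
            (\<forall>x\<in>X. Ex x \<in> H) \<and>
            (\<forall>x\<in>X. (Ex x - Y) \<inter> X = {x}) \<and>
            (\<forall>E\<in>H. (E - Y) \<inter> X = {} \<longrightarrow> \<not> (E - Y \<subseteq> (\<Union>x\<in>X. Ex x - Y)))"
  proof (intro exI conjI ballI impI)
    fix x assume "x \<in> X" then show "Ex x \<in> H" using Ex by blast
  next
    fix x assume x: "x \<in> X" then show "(Ex x - Y) \<inter> X = {x}" using Ex[OF x] T assms(4) by blast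
  next
    fix E assume E: "E \<in> H" "(E - Y) \<inter> X = {}"
    show "\<not> (E - Y \<subseteq> (\<Union>x\<in>X. Ex x - Y))"
    proof
      assume sub: "E - Y \<subseteq> (\<Union>x\<in>X. Ex x - Y)"
      obtain t where t: "t \<in> T" "t \<in> E" using hs E(1) unfolding hitting_set_def by blast
      then have "t \<in> E - Y" using T(3) by blast
      then obtain x where "x \<in> X" "t \<in> Ex x" using sub by blast
      then have "t = x" using Ex t by blast
      then show False using E(2) \<open>t \<in> E - Y\<close> \<open>x \<in> X\<close> by blast
    qed
  qed
next
  assume "\<exists>Ex :: 'a \<Rightarrow> 'a set.
            (\<forall>x\<in>X. Ex x \<in> H) \<and>
            (\<forall>x\<in>X. (Ex x - Y) \<inter> X = {x}) \<and>
            (\<forall>E\<in>H. (E - Y) \<inter> X = {} \<longrightarrow> \<not> (E - Y \<subseteq> (\<Union>x\<in>X. Ex x - Y)))"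
  then obtain Ex where E1: "\<forall>x\<in>X. Ex x \<in> H" and E2: "\<forall>x\<in>X. (Ex x - Y) \<inter> X = {x}"
    and E3: "\<forall>E\<in>H. (E - Y) \<inter> X = {} \<longrightarrow> \<not> (E - Y \<subseteq> (\<Union>x\<in>X. Ex x - Y))" by blast
  define U where "U = (\<Union>x\<in>X. Ex x - Y)"
  define T0 where "T0 = X \<union> (V - Y - U)"
  have "T0 \<subseteq> V" using assms(2) unfolding T0_def by blast
  then have fin: "finite T0" using assms(1) unfolding hypergraph_def using finite_subset by blast
  have hs: "hitting_set V H T0"
    unfolding hitting_set_def
  proof (intro conjI ballI)
    show "T0 \<subseteq> V" using assms(2) unfolding T0_def by blast
  next
    fix E assume E: "E \<in> H"
    have EV: "E \<subseteq> V" using E assms(1) unfolding hypergraph_def by blast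
    show "T0 \<inter> E \<noteq> {}"
    proof (cases "(E - Y) \<inter> X = {}")
      case True
      then have "\<not> (E - Y \<subseteq> U)" using E3 E unfolding U_def by simp
      then obtain v where "v \<in> E" "v \<notin> Y" "v \<notin> U" by blast
      then show ?thesis using EV unfolding T0_def by blast
    next
      case False then show ?thesis unfolding T0_def by blast
    qed
  qed
  obtain T where T: "T \<subseteq> T0" "T \<in> Tr V H" using exists_min_hs[OF fin hs] by blast
  have "X \<subseteq> T"
  proof
    fix x assume x: "x \<in> X"
    have "Ex x \<inter> T0 \<subseteq> {x}"
    proof
      fix v assume v: "v \<in> Ex x \<inter> T0"
      show "v \<in> {x}"
      proof (cases "v \<in> X")
        case True
        have "(Ex x - Y) \<inter> X = {x}" using E2 x by simp
        then show ?thesis using v True assms(4) by blast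
      next
        case False
        then have "v \<in> V - Y - U" using v unfolding T0_def by blast
        moreover have "Ex x - Y \<subseteq> U" using x unfolding U_def by blast
        ultimately show ?thesis using v by blast
      qed
    qed
    moreover have "hitting_set V H T" using T(2) unfolding Tr_def by simp
    moreover have "Ex x \<in> H" using E1 x by simp
    ultimately have "T \<inter> Ex x \<noteq> {}" unfolding hitting_set_def by simp
    moreover note \<open>Ex x \<inter> T0 \<subseteq> {x}\<close>
    ultimately show "x \<in> T" using T(1) by blast
  qed
  moreover have "T \<subseteq> V - Y" using T(1) unfolding T0_def using assms(2,4) by blast
  ultimately show "\<exists>T\<in>Tr V H. X \<subseteq> T \<and> T \<subseteq> V - Y" using T(2) by blast
qed

end
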